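(* Let $L\geq1$ be an integer, $P\geq0$, $p_B\in[0,1]$, $\tau_{\max}>0$, $D$ an integer with $D\geq\lceil\tau_{\max}\rceil+1$, and fix delays $\boldsymbol\tau\in[0,\tau_{\max}]^L$ with $\tau_l=d_l+\delta_l$, $d_l\in\mathbb{N}$, $\delta_l\in[0,1)$. Let $\beta_1,\ldots,\beta_L$ be i.i.d. with $\mathbb{P}(\beta_l=0)=p_B$, $\mathbb{P}(\beta_l=1)=1-p_B$; $\theta_1,\ldots,\theta_L$ i.i.d. $\mathrm{Uniform}(0,2\pi)$; and, for each $K\geq1$, $\{\phi_{l,k}\}_{l\in\{1,\ldots,L\},k\in\{0,\ldots,K-1\}}$ i.i.d. $\mathrm{Uniform}(0,2\pi)$; all mutually independent. For $k\in\{0,\ldots,K-1\}$ let $G_l[k]:=(1-\delta_l)+\delta_le^{-j2\pi k/K}$, $H_l[k]:=\beta_le^{j(\theta_l-2\pi kd_l/K)}G_l[k]$, $$R_k:=\log\Big(1+\Big|\sum_{l=1}^LH_l[k]e^{j\phi_{l,k}}\Big|^2P\Big),$$ and for $\mathbf{b}\in\{0,1\}^L$ $$\bar R_k(\mathbf{b}):=\mathbb{E}\Big[\log\Big(1+\Big|\textstyle\sum_{l=1}^Lb_le^{j\vartheta_l}G_l[k]\Big|^2P\Big)\Big],$$ where $\vartheta_1,\ldots,\vartheta_L$ are i.i.d. $\mathrm{Uniform}(0,2\pi)$. Then for every $\epsilon>0$, $$\lim_{K\to\infty}\mathbb{P}\Big(\Big|\frac{1}{K+D}\sum_{k=0}^{K-1}\big(R_k-\bar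 R_k(\boldsymbol\beta)\big)\Big|\geq\epsilon\Big)=0.$$
   Context: This concerns OFDM-based non-coherent joint transmission with phase diversity applied in the frequency domain (transmitter $l$ multiplies subcarrier $k$ by $e^{j\phi_{l,k}}$) under residual timing offsets, with triangular effective pulse; $R_k$ is the instantaneous rate on subcarrier $k$. $D$ is fixed as $K$ varies. $\log$ is the logarithm in a fixed base. *)

theory Defs
  imports "HOL-Probability.Probability"
begin

text \<open>Transmitter indices l range over {1..L}; subcarrier indices k over {0..<K}.
  A sample point is (beta, theta, phi), with beta l = True meaning beta_l = 1.\<close>

definition unif2pi :: "real measure" where
  "unif2pi = uniform_measure lborel {0..2*pi}"

definition beta_measure :: "nat \<Rightarrow> real \<Rightarrow> (nat \<Rightarrow> bool) measure" where
  "beta_measure L pB = (PiM {1..L} (\<lambda>l. measure_pmf (bernoulli_pmf (1 - pB))))"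

definition theta_measure :: "nat \<Rightarrow> (nat \<Rightarrow> real) measure" where
  "theta_measure L = (PiM {1..L} (\<lambda>l. unif2pi))"

definition phi_measure :: "nat \<Rightarrow> nat \<Rightarrow> (nat \<times> nat \<Rightarrow> real) measure" where
  "phi_measure L K = (PiM ({1..L} \<times> {0..<K}) (\<lambda>lk. unif2pi))"

definition joint_measure ::
  "nat \<Rightarrow> real \<Rightarrow> nat \<Rightarrow> ((nat \<Rightarrow> bool) \<times> (nat \<Rightarrow> real) \<times> (nat \<times> nat \<Rightarrow> real)) measure" where
  "joint_measure L pB K = beta_measure L pB \<Otimes>\<^sub>M (theta_measure L \<Otimes>\<^sub>M phi_measure L K)"

definition Gk :: "(nat \<Rightarrow> real) \<Rightarrow> nat \<Rightarrow> nat \<Rightarrow> nat \<Rightarrow> complex" where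
  "Gk \<delta> K l k = complex_of_real (1 - \<delta> l) + complex_of_real (\<delta> l) * cis (- 2 * pi * real k / real K)"

definition Hk :: "(nat \<Rightarrow> nat) \<Rightarrow> (nat \<Rightarrow> real) \<Rightarrow> nat \<Rightarrow> (nat \<Rightarrow> bool) \<Rightarrow> (nat \<Rightarrow> real)
    \<Rightarrow> nat \<Rightarrow> nat \<Rightarrow> complex" where
  "Hk d \<delta> K \<beta> \<theta> l k = (if \<beta> l then 1 else 0) * cis (\<theta> l - 2 * pi * real k * real (d l) / real K) * Gk \<delta> K l k"

definition Rk :: "real \<Rightarrow> real \<Rightarrow> nat \<Rightarrow> (nat \<Rightarrow> nat) \<Rightarrow> (nat \<Rightarrow> real) \<Rightarrow> nat
    \<Rightarrow> (nat \<Rightarrow> bool) \<Rightarrow> (nat \<Rightarrow> real) \<Rightarrow> (nat \<times> nat \<Rightarrow> real) \<Rightarrow> nat \<Rightarrow> real" where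
  "Rk b P L d \<delta> K \<beta> \<theta> \<phi> k =
     log b (1 + (cmod (\<Sum>l\<in>{1..L}. Hk d \<delta> K \<beta> \<theta> l k * cis (\<phi> (l, k))))\<^sup>2 * P)"

definition Rbar :: "real \<Rightarrow> real \<Rightarrow> nat \<Rightarrow> (nat \<Rightarrow> real) \<Rightarrow> nat \<Rightarrow> (nat \<Rightarrow> bool) \<Rightarrow> nat \<Rightarrow> real" where
  "Rbar b P L \<delta> K bb k =
     (\<integral>\<psi>. log b (1 + (cmod (\<Sum>l\<in>{1..L}. (if bb l then 1 else 0) * cis (\<psi> l) * Gk \<delta> K l k))\<^sup>2 * P)
        \<partial>(theta_measure L))"

end

theory Submission
  imports Defs "HOL-Real_Asymp.Real_Asymp"
begin


lemma sets_unif2pi[measurable_cong]: "sets unif2pi = sets borel"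
  by (simp add: unif2pi_def)

lemma space_unif2pi[simp]: "space unif2pi = UNIV"
  by (simp add: unif2pi_def)

lemma prob_unif2pi: "prob_space unif2pi"
  unfolding unif2pi_def by (rule prob_space_uniform_measure) auto

lemma cis_borel[measurable]: "cis \<in> borel_measurable borel"
  by (intro borel_measurable_continuous_onI continuous_intros)

lemma nn_shift:
  fixes g :: "real \<Rightarrow> ennreal" assumes [measurable]: "g \<in> borel_measurable borel"
  shows "(\<integral>\<^sup>+x. g (x + c) \<partial>lborel) = (\<integral>\<^sup>+x. g x \<partial>lborel)"
  using nn_integral_real_affine[of g 1 c] by (simp add: add.commute)

lemma per_int_nat:
  fixes g :: "real \<Rightarrow> ennreal" assumes "\<And>x. g (x + 2*pi) = g x"
  shows "g (x + 2*pi*real n) = g x"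
proof (induction n arbitrary: x)
  case (Suc n)
  have "g (x + 2*pi*real (Suc n)) = g ((x + 2*pi*real n) + 2*pi)" by (simp add: algebra_simps)
  then show ?case using assms Suc by simp
qed simp

lemma per_int_int:
  fixes g :: "real \<Rightarrow> ennreal" assumes "\<And>x. g (x + 2*pi) = g x"
  shows "g (x + 2*pi*real_of_int n) = g x"
proof (cases "n \<ge> 0")
  case True
  then obtain m where "n = int m" by (metis nonneg_eq_int)
  then show ?thesis using per_int_nat[of g, OF assms] by simp
next
  case False
  then obtain m where m: "n = - int m" by (metis linorder_not_le neg_eq_iff_add_eq_0 nonneg_eq_int add.commute less_imp_le neg_0_le_iff_le)
  have "g x = g ((x + 2*pi*real_of_int n) + 2*pi*real m)" by (simp add: m)
  also have "\<dots> = g (x + 2*pi*real_of_int n)" by (rule per_int_nat[of g, OF assms])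
  finally show ?thesis by simp
qed

lemma per_int_small:
  fixes g :: "real \<Rightarrow> ennreal" assumes g[measurable]: "g \<in> borel_measurable borel"
    and per: "\<And>x. g (x + 2*pi) = g x" and c: "0 \<le> c" "c < 2*pi"
  shows "(\<integral>\<^sup>+x. g (x + c) * indicator {0..<2*pi} x \<partial>lborel) = (\<integral>\<^sup>+x. g x * indicator {0..<2*pi} x \<partial>lborel)"
proof -
  have "(\<integral>\<^sup>+x. g (x + c) * indicator {0..<2*pi} x \<partial>lborel) =
     (\<integral>\<^sup>+x. g (x + c) * indicator {0..<2*pi-c} x + g (x + c) * indicator {2*pi-c..<2*pi} x \<partial>lborel)"
    using c by (intro nn_integral_cong) (auto simp: indicator_def)
  also have "\<dots> = (\<integral>\<^sup>+x. g (x + c) * indicator {0..<2*pi-c} x \<partial>lborel) + (\<integral>\<^sup>+x. g (x + c) * indicator {2*pi-c..<2*pi} x \<partial>lborel)"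
    by (rule nn_integral_add) auto
  also have "(\<integral>\<^sup>+x. g (x + c) * indicator {0..<2*pi-c} x \<partial>lborel) = (\<integral>\<^sup>+x. g x * indicator {c..<2*pi} x \<partial>lborel)"
  proof -
    have "(\<integral>\<^sup>+x. g (x + c) * indicator {0..<2*pi-c} x \<partial>lborel) = (\<integral>\<^sup>+x. (\<lambda>y. g y * indicator {c..<2*pi} y) (x + c) \<partial>lborel)"
      by (intro nn_integral_cong) (auto simp: indicator_def)
    also have "\<dots> = (\<integral>\<^sup>+x. g x * indicator {c..<2*pi} x \<partial>lborel)"
      by (rule nn_shift) auto
    finally show ?thesis .
  qed
  also have "(\<integral>\<^sup>+x. g (x + c) * indicator {2*pi-c..<2*pi} x \<partial>lborel) = (\<integral>\<^sup>+x. g x * indicator {0..<c} x \<partial>lborel)"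
  proof -
    have "(\<integral>\<^sup>+x. g (x + c) * indicator {2*pi-c..<2*pi} x \<partial>lborel) = (\<integral>\<^sup>+x. (\<lambda>y. g y * indicator {0..<c} y) (x + (c - 2*pi)) \<partial>lborel)"
    proof (intro nn_integral_cong)
      fix x
      have "g (x + c) = g (x + (c - 2*pi))" using per[of "x + (c - 2*pi)"] by simp
      then show "g (x + c) * indicator {2*pi-c..<2*pi} x = (\<lambda>y. g y * indicator {0..<c} y) (x + (c - 2*pi))"
        by (auto simp: indicator_def)
    qed
    also have "\<dots> = (\<integral>\<^sup>+x. g x * indicator {0..<c} x \<partial>lborel)"
      by (rule nn_shift) auto
    finally show ?thesis .
  qed
  also have "(\<integral>\<^sup>+x. g x * indicator {c..<2*pi} x \<partial>lborel) + (\<integral>\<^sup>+x. g x * indicator {0..<c} x \<partial>lborel)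
     = (\<integral>\<^sup>+x. g x * indicator {c..<2*pi} x + g x * indicator {0..<c} x \<partial>lborel)"
    by (rule nn_integral_add[symmetric]) auto
  also have "\<dots> = (\<integral>\<^sup>+x. g x * indicator {0..<2*pi} x \<partial>lborel)"
    using c by (intro nn_integral_cong) (auto simp: indicator_def)
  finally show ?thesis .
qed

lemma per_int_all:
  fixes g :: "real \<Rightarrow> ennreal" assumes g[measurable]: "g \<in> borel_measurable borel"
    and per: "\<And>x. g (x + 2*pi) = g x"
  shows "(\<integral>\<^sup>+x. g (x + c) * indicator {0..<2*pi} x \<partial>lborel) = (\<integral>\<^sup>+x. g x * indicator {0..<2*pi} x \<partial>lborel)"
proof -
  define n where "n = floor (c / (2*pi))"
  define c' where "c' = c - 2*pi*real_of_int n"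
  have "real_of_int n \<le> c / (2*pi)" "c / (2*pi) < real_of_int n + 1" unfolding n_def by linarith+
  then have c': "0 \<le> c'" "c' < 2*pi" unfolding c'_def by (auto simp: field_simps)
  have "\<And>x. g (x + c) = g (x + c')"
    using per_int_int[of g, OF per, of "x + c'" n for x] unfolding c'_def by (simp add: algebra_simps)
  then show ?thesis using per_int_small[OF g per c'] by simp
qed

lemma unif_shift:
  fixes g :: "real \<Rightarrow> ennreal" assumes g[measurable]: "g \<in> borel_measurable borel"
    and per: "\<And>x. g (x + 2*pi) = g x"
  shows "(\<integral>\<^sup>+x. g (x + c) \<partial>unif2pi) = (\<integral>\<^sup>+x. g x \<partial>unif2pi)"
proof -
  have ae: "AE x in lborel. indicator {0..2*pi} x = (indicator {0..<2*pi} x :: ennreal)"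
    using AE_lborel_singleton[of "2*pi"] by eventually_elim (auto simp: indicator_def)
  have "\<And>h. h \<in> borel_measurable borel \<Longrightarrow> (\<integral>\<^sup>+x. h x \<partial>unif2pi) = (\<integral>\<^sup>+x. h x * indicator {0..<2*pi} x \<partial>lborel) / emeasure lborel {0..2*pi::real}"
  proof -
    fix h :: "real \<Rightarrow> ennreal" assume [measurable]: "h \<in> borel_measurable borel"
    have "(\<integral>\<^sup>+x. h x \<partial>unif2pi) = (\<integral>\<^sup>+x. h x * indicator {0..2*pi} x \<partial>lborel) / emeasure lborel {0..2*pi::real}"
      unfolding unif2pi_def by (rule nn_integral_uniform_measure) auto
    also have "(\<integral>\<^sup>+x. h x * indicator {0..2*pi} x \<partial>lborel) = (\<integral>\<^sup>+x. h x * indicator {0..<2*pi} x \<partial>lborel)"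
      using ae by (intro nn_integral_cong_AE) (auto elim!: eventually_mono)
    finally show "(\<integral>\<^sup>+x. h x \<partial>unif2pi) = (\<integral>\<^sup>+x. h x * indicator {0..<2*pi} x \<partial>lborel) / emeasure lborel {0..2*pi::real}" .
  qed
  from this[of g] this[of "\<lambda>x. g (x + c)"] show ?thesis
    using per_int_all[OF g per, of c] by simp
qed

lemma distr_unif_cis_shift:
  "distr unif2pi borel (\<lambda>x. cis (x + c)) = distr unif2pi borel cis"
proof (rule measure_eqI)
  fix A :: "complex set" assume A: "A \<in> sets (distr unif2pi borel (\<lambda>x. cis (x + c)))"
  then have A[measurable]: "A \<in> sets borel" by simp
  have "emeasure (distr unif2pi borel (\<lambda>x. cis (x + c))) A = (\<integral>\<^sup>+x. indicator A (cis (x + c)) \<partial>unif2pi)"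
  proof -
    have "emeasure (distr unif2pi borel (\<lambda>x. cis (x + c))) A = emeasure unif2pi ((\<lambda>x. cis (x + c)) -` A)"
      by (subst emeasure_distr) auto
    also have "\<dots> = (\<integral>\<^sup>+x. indicator ((\<lambda>x. cis (x + c)) -` A) x \<partial>unif2pi)"
      by (rule nn_integral_indicator[symmetric]) (simp add: sets_unif2pi measurable_sets_borel[OF _ A, of "\<lambda>x. cis (x + c)"])
    finally show ?thesis by (simp add: indicator_def)
  qed
  also have "\<dots> = (\<integral>\<^sup>+x. indicator A (cis x) \<partial>unif2pi)"
  proof (rule unif_shift[where g = "\<lambda>x. indicator A (cis x)"])
    show "(\<lambda>x. indicator A (cis x)) \<in> borel_measurable borel" by measurable
    fix x show "indicator A (cis (x + 2 * pi)) = (indicator A (cis x) :: ennreal)"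
      by (simp add: cis_mult[symmetric])
  qed
  also have "\<dots> = emeasure (distr unif2pi borel cis) A"
  proof -
    have "emeasure (distr unif2pi borel cis) A = emeasure unif2pi (cis -` A)"
      by (subst emeasure_distr) auto
    also have "\<dots> = (\<integral>\<^sup>+x. indicator (cis -` A) x \<partial>unif2pi)"
      by (rule nn_integral_indicator[symmetric]) (use measurable_sets_borel[OF cis_borel A] in simp)
    finally show ?thesis by (simp add: indicator_def)
  qed
  finally show "emeasure (distr unif2pi borel (\<lambda>x. cis (x + c))) A = emeasure (distr unif2pi borel cis) A" .
qed simp



lemma dbg:
  assumes "i \<in> I"
  shows "(\<lambda>\<omega>. \<omega> i) \<in> measurable (PiM I M) (M i)"
  using assms by (rule measurable_component_singleton)

lemma indep_coords:
  assumes fin: "finite I" and M: "\<And>i. i \<in> I \<Longrightarrow> prob_space (M i)" and False: "I \<noteq> {}"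
  shows "prob_space.indep_vars (PiM I M) M (\<lambda>i \<omega>. \<omega> i) I"
proof -
  interpret P: prob_space "PiM I M" by (rule prob_space_PiM) (use M in auto)
  show ?thesis
    proof (rule P.indep_vars_iff_distr_eq_PiM'[THEN iffD2, OF False])
      show "(\<lambda>\<omega>. \<omega> i) \<in> measurable (PiM I M) (M i)" if "i \<in> I" for i
        using that by (rule dbg)
      have "distr (PiM I M) (PiM I M) (\<lambda>x. \<lambda>i\<in>I. x i) = distr (PiM I M) (PiM I M) (\<lambda>x. x)"
        by (rule distr_cong) (auto simp: space_PiM PiE_def extensional_restrict)
      also have "\<dots> = PiM I M" by (rule distr_id)
      also have "\<dots> = PiM I (\<lambda>i. distr (PiM I M) (M i) (\<lambda>x. x i))"
        by (rule PiM_cong) (auto simp: distr_PiM_component M)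
      finally show "distr (PiM I M) (PiM I M) (\<lambda>x. \<lambda>i\<in>I. x i) = PiM I (\<lambda>i. distr (PiM I M) (M i) (\<lambda>x. x i))" .
    qed
qed

lemma distr_theta_cis:
  assumes "L \<ge> 1"
  shows "distr (theta_measure L) (PiM {1..L} (\<lambda>_. borel)) (\<lambda>\<psi>. \<lambda>l\<in>{1..L}. cis (\<psi> l + c l))
     = PiM {1..L} (\<lambda>_. distr unif2pi borel cis)"
proof -
  let ?T = "theta_measure L"
  interpret P: prob_space ?T unfolding theta_measure_def by (rule prob_space_PiM) (use prob_unif2pi in auto)
  have ne: "{1..L} \<noteq> {}" using assms by auto
  have ind: "P.indep_vars (\<lambda>_. unif2pi) (\<lambda>i \<omega>. \<omega> i) {1..L}"
    unfolding theta_measure_def by (rule indep_coords) (use ne in \<open>auto simp: prob_unif2pi\<close>)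
  have ind2: "P.indep_vars (\<lambda>_. borel) (\<lambda>l \<psi>. cis (\<psi> l + c l)) {1..L}"
    by (rule P.indep_vars_compose2[OF ind, where Y = "\<lambda>l x. cis (x + c l)"]) measurable
  have "distr ?T (PiM {1..L} (\<lambda>_. borel)) (\<lambda>\<psi>. \<lambda>l\<in>{1..L}. cis (\<psi> l + c l))
       = PiM {1..L} (\<lambda>l. distr ?T borel (\<lambda>\<psi>. cis (\<psi> l + c l)))"
    by (rule P.indep_vars_iff_distr_eq_PiM'[THEN iffD1, OF ne _ ind2])
       (simp add: theta_measure_def)
  also have "\<dots> = PiM {1..L} (\<lambda>_. distr unif2pi borel cis)"
  proof (rule PiM_cong)
    fix l assume l: "l \<in> {1..L}"
    have m1: "(\<lambda>\<psi>. \<psi> l) \<in> measurable ?T unif2pi"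
      unfolding theta_measure_def using l by (rule measurable_component_singleton)
    have m2: "(\<lambda>x. cis (x + c l)) \<in> measurable unif2pi borel" by measurable
    have "distr ?T borel (\<lambda>\<psi>. cis (\<psi> l + c l)) = distr (distr ?T unif2pi (\<lambda>\<psi>. \<psi> l)) borel (\<lambda>x. cis (x + c l))"
      by (subst distr_distr[OF m2 m1]) (simp add: comp_def)
    also have "distr ?T unif2pi (\<lambda>\<psi>. \<psi> l) = unif2pi"
      unfolding theta_measure_def by (rule distr_PiM_component) (use l prob_unif2pi in auto)
    finally show "distr ?T borel (\<lambda>\<psi>. cis (\<psi> l + c l)) = distr unif2pi borel cis"
      by (simp add: distr_unif_cis_shift)
  qed simp
  finally show ?thesis .
qed

lemma theta_shift:
  fixes Q :: "(nat \<Rightarrow> complex) \<Rightarrow> real"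
  assumes "L \<ge> 1" and Q[measurable]: "Q \<in> borel_measurable (PiM {1..L} (\<lambda>_. borel :: complex measure))"
  shows "(\<integral>\<psi>. Q (\<lambda>l\<in>{1..L}. cis (\<psi> l + c l)) \<partial>theta_measure L) = (\<integral>\<psi>. Q (\<lambda>l\<in>{1..L}. cis (\<psi> l)) \<partial>theta_measure L)"
proof -
  have m: "(\<lambda>\<psi>. \<lambda>l\<in>{1..L}. cis (\<psi> l + c l)) \<in> measurable (theta_measure L) (PiM {1..L} (\<lambda>_. borel))" for c
    unfolding theta_measure_def by measurable
  have "(\<integral>\<psi>. Q (\<lambda>l\<in>{1..L}. cis (\<psi> l + c l)) \<partial>theta_measure L) = integral\<^sup>L (distr (theta_measure L) (PiM {1..L} (\<lambda>_. borel)) (\<lambda>\<psi>. \<lambda>l\<in>{1..L}. cis (\<psi> l + c l))) Q"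
    by (rule integral_distr[OF m[of c] Q, symmetric])
  also have "\<dots> = integral\<^sup>L (distr (theta_measure L) (PiM {1..L} (\<lambda>_. borel)) (\<lambda>\<psi>. \<lambda>l\<in>{1..L}. cis (\<psi> l + 0))) Q"
    by (simp only: distr_theta_cis[OF assms(1)])
  also have "\<dots> = (\<integral>\<psi>. Q (\<lambda>l\<in>{1..L}. cis (\<psi> l)) \<partial>theta_measure L)"
    using integral_distr[OF m[of "\<lambda>_. 0"] Q] by simp
  finally show ?thesis .
qed



definition Qk :: "real \<Rightarrow> real \<Rightarrow> nat \<Rightarrow> (nat \<Rightarrow> real) \<Rightarrow> nat \<Rightarrow> (nat \<Rightarrow> bool) \<Rightarrow> nat \<Rightarrow> (nat \<Rightarrow> complex) \<Rightarrow> real" where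
  "Qk b P L \<delta> K bb k w = log b (1 + (cmod (\<Sum>l\<in>{1..L}. (if bb l then 1 else 0) * w l * Gk \<delta> K l k))\<^sup>2 * P)"

lemma Qk_measurable[measurable]:
  "Qk b P L \<delta> K bb k \<in> borel_measurable (PiM {1..L} (\<lambda>_. borel))"
  unfolding Qk_def by measurable

lemma Gk_norm: assumes "0 \<le> \<delta> l" "\<delta> l \<le> 1" shows "cmod (Gk \<delta> K l k) \<le> 1"
proof -
  have "cmod (Gk \<delta> K l k) \<le> cmod (complex_of_real (1 - \<delta> l)) + cmod (complex_of_real (\<delta> l) * cis (- 2 * pi * real k / real K))"
    unfolding Gk_def by (rule norm_triangle_ineq)
  also have "cmod (complex_of_real (1 - \<delta> l)) = 1 - \<delta> l" using assms by (simp only: norm_of_real)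
  also have "cmod (complex_of_real (\<delta> l) * cis (- 2 * pi * real k / real K)) = \<delta> l" using assms by (simp add: norm_mult)
  finally show ?thesis by simp
qed

lemma Qk_bounds:
  assumes P: "P \<ge> 0" and b: "b > 1" and dl: "\<forall>l\<in>{1..L}. 0 \<le> \<delta> l \<and> \<delta> l \<le> 1"
    and w: "\<forall>l\<in>{1..L}. cmod (w l) = 1"
  shows "0 \<le> Qk b P L \<delta> K bb k w" "Qk b P L \<delta> K bb k w \<le> log b (1 + (real L)\<^sup>2 * P)"
proof -
  let ?S = "\<Sum>l\<in>{1..L}. (if bb l then 1 else 0) * w l * Gk \<delta> K l k"
  have "cmod ?S \<le> (\<Sum>l\<in>{1..L}. cmod ((if bb l then 1 else 0) * w l * Gk \<delta> K l k))"
    by (rule norm_sum)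
  also have "\<dots> \<le> (\<Sum>l\<in>{1..L}. 1)"
  proof (rule sum_mono)
    fix l assume l: "l \<in> {1..L}"
    have "cmod (Gk \<delta> K l k) \<le> 1" using dl l Gk_norm by blast
    then show "cmod ((if bb l then 1 else 0) * w l * Gk \<delta> K l k) \<le> 1"
      using w l by (auto simp: norm_mult)
  qed
  finally have S: "cmod ?S \<le> real L" by simp
  have "(cmod ?S)\<^sup>2 \<le> (real L)\<^sup>2" using S by (intro power_mono) auto
  then have le: "(cmod ?S)\<^sup>2 * P \<le> (real L)\<^sup>2 * P" using P by (intro mult_right_mono) auto
  have ge: "0 \<le> (cmod ?S)\<^sup>2 * P" using P by simp
  show "0 \<le> Qk b P L \<delta> K bb k w" unfolding Qk_def using b ge by simp
  show "Qk b P L \<delta> K bb k w \<le> log b (1 + (real L)\<^sup>2 * P)" unfolding Qk_def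
    using b ge le by (subst log_le_cancel_iff) auto
qed



lemma meas_shift_vec:
  assumes "\<forall>l\<in>J. g l \<in> I"
  shows "(\<lambda>\<rho>. \<lambda>l\<in>J. cis (\<rho> (g l) + c l)) \<in> measurable (PiM I (\<lambda>_. unif2pi)) (PiM J (\<lambda>_. borel))"
proof (rule measurable_restrict)
  fix l assume l: "l \<in> J"
  have m1: "(\<lambda>\<rho>. \<rho> (g l)) \<in> measurable (PiM I (\<lambda>_. unif2pi)) unif2pi"
    using assms l by (intro measurable_component_singleton) auto
  have m2: "(\<lambda>x. cis (x + c l)) \<in> measurable unif2pi borel" by measurable
  show "(\<lambda>\<rho>. cis (\<rho> (g l) + c l)) \<in> measurable (PiM I (\<lambda>_. unif2pi)) borel"
    using measurable_compose[OF m1 m2] .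
qed

lemma meas_proj_vec:
  assumes "\<forall>l\<in>J. g l \<in> I"
  shows "(\<lambda>\<rho>. \<lambda>l\<in>J. \<rho> (g l)) \<in> measurable (PiM I (\<lambda>_. unif2pi)) (PiM J (\<lambda>_. unif2pi))"
proof (rule measurable_restrict)
  fix l assume l: "l \<in> J"
  show "(\<lambda>\<rho>. \<rho> (g l)) \<in> measurable (PiM I (\<lambda>_. unif2pi)) unif2pi"
    using assms l by (intro measurable_component_singleton) auto
qed

lemma Qk_cong: "(\<And>l. l \<in> {1..L} \<Longrightarrow> w l = w' l) \<Longrightarrow> Qk b P L \<delta> K bb k w = Qk b P L \<delta> K bb k w'"
  unfolding Qk_def by (metis (no_types, lifting) sum.cong)

lemma Rk_eq:
  "Rk b P L d \<delta> K \<beta> \<theta> \<phi> k = Qk b P L \<delta> K \<beta> k (\<lambda>l\<in>{1..L}. cis (\<phi> (l,k) + (\<theta> l - 2*pi*real k*real (d l)/real K)))"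
  unfolding Rk_def Qk_def Hk_def
proof (intro arg_cong[where f = "\<lambda>z. log b (1 + (cmod z)\<^sup>2 * P)"] sum.cong refl)
  fix l assume "l \<in> {1..L}"
  then show "(if \<beta> l then 1 else 0) * cis (\<theta> l - 2 * pi * real k * real (d l) / real K) * Gk \<delta> K l k * cis (\<phi> (l, k)) =
    (if \<beta> l then 1 else 0) * (\<lambda>l\<in>{1..L}. cis (\<phi> (l, k) + (\<theta> l - 2 * pi * real k * real (d l) / real K))) l * Gk \<delta> K l k"
    by (simp add: cis_mult[symmetric] ac_simps)
qed

lemma Rbar_eq:
  "Rbar b P L \<delta> K \<beta> k = (\<integral>\<psi>. Qk b P L \<delta> K \<beta> k (\<lambda>l\<in>{1..L}. cis (\<psi> l + 0)) \<partial>theta_measure L)"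
proof -
  have "\<And>\<psi>. Qk b P L \<delta> K \<beta> k (\<lambda>l\<in>{1..L}. cis (\<psi> l + 0)) = Qk b P L \<delta> K \<beta> k (\<lambda>l. cis (\<psi> l))"
    by (rule Qk_cong) simp
  then show ?thesis unfolding Rbar_def by (simp add: Qk_def)
qed

lemma Rbar_bounds:
  assumes L: "L \<ge> 1" and P: "P \<ge> 0" and b: "b > 1" and dl: "\<forall>l\<in>{1..L}. 0 \<le> \<delta> l \<and> \<delta> l \<le> 1"
  shows "0 \<le> Rbar b P L \<delta> K \<beta> k" "Rbar b P L \<delta> K \<beta> k \<le> log b (1 + (real L)\<^sup>2 * P)"
proof -
  interpret T: prob_space "theta_measure L" unfolding theta_measure_def
    by (rule prob_space_PiM) (use prob_unif2pi in auto)
  let ?f = "\<lambda>\<psi>. Qk b P L \<delta> K \<beta> k (\<lambda>l\<in>{1..L}. cis (\<psi> l + 0))"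
  have m: "(\<lambda>\<psi>. \<lambda>l\<in>{1..L}. cis (\<psi> l + 0)) \<in> measurable (theta_measure L) (PiM {1..L} (\<lambda>_. borel))"
    unfolding theta_measure_def by (rule meas_shift_vec) auto
  have fm: "?f \<in> borel_measurable (theta_measure L)"
    using measurable_compose[OF m Qk_measurable] .
  have bnd: "0 \<le> ?f \<psi> \<and> ?f \<psi> \<le> log b (1 + (real L)\<^sup>2 * P)" for \<psi>
    using Qk_bounds[OF P b dl, of "\<lambda>l\<in>{1..L}. cis (\<psi> l + 0)"] by auto
  have int: "integrable (theta_measure L) ?f"
    by (rule T.integrable_const_bound[where B = "log b (1 + (real L)\<^sup>2 * P)"]) (use bnd fm in auto)
  show "0 \<le> Rbar b P L \<delta> K \<beta> k" unfolding Rbar_eq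
    by (rule T.integral_ge_const[OF int]) (use bnd in auto)
  show "Rbar b P L \<delta> K \<beta> k \<le> log b (1 + (real L)\<^sup>2 * P)" unfolding Rbar_eq
    by (rule T.integral_le_const[OF int]) (use bnd in auto)
qed



lemma core:
  assumes L: "L \<ge> 1" and P: "P \<ge> 0" and b: "b > 1" and dl: "\<forall>l\<in>{1..L}. 0 \<le> \<delta> l \<and> \<delta> l \<le> 1"
    and K: "K \<ge> 1" and e: "e > 0"
  shows "measure (phi_measure L K) {\<phi> \<in> space (phi_measure L K).
            e \<le> \<bar>\<Sum>k<K. Rk b P L d \<delta> K \<beta> \<theta> \<phi> k - Rbar b P L \<delta> K \<beta> k\<bar>}
         \<le> real K * (log b (1 + (real L)\<^sup>2 * P))\<^sup>2 / e\<^sup>2"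
proof -
  define \<Phi> where "\<Phi> = phi_measure L K"
  define Mx where "Mx = log b (1 + (real L)\<^sup>2 * P)"
  define c where "c = (\<lambda>j l. \<theta> l - 2*pi*real j*real (d l)/real K)"
  define I where "I = (\<lambda>j::nat. {1..L} \<times> {j})"
  define Z where "Z = (\<lambda>j \<rho>. Qk b P L \<delta> K \<beta> j (\<lambda>l\<in>{1..L}. cis (\<rho> (l,j) + c j l)) - Rbar b P L \<delta> K \<beta> j)"
  define Y where "Y = (\<lambda>j \<omega>. Z j (restrict \<omega> (I j)))"
  have \<Phi>_def': "\<Phi> = PiM ({1..L} \<times> {0..<K}) (\<lambda>_. unif2pi)" unfolding \<Phi>_def phi_measure_def ..
  interpret F: prob_space \<Phi> unfolding \<Phi>_def' by (rule prob_space_PiM) (use prob_unif2pi in auto)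
  have Yeq: "Y j \<omega> = Rk b P L d \<delta> K \<beta> \<theta> \<omega> j - Rbar b P L \<delta> K \<beta> j" for j \<omega>
    unfolding Y_def Z_def Rk_eq c_def by (intro arg_cong2[where f = "(-)"] Qk_cong refl) (auto simp: I_def)
  have Zm: "Z j \<in> borel_measurable (PiM (I j) (\<lambda>_. unif2pi))" for j
  proof -
    have "(\<lambda>\<rho>. \<lambda>l\<in>{1..L}. cis (\<rho> (l,j) + c j l)) \<in> measurable (PiM (I j) (\<lambda>_. unif2pi)) (PiM {1..L} (\<lambda>_. borel))"
      by (rule meas_shift_vec) (auto simp: I_def)
    from measurable_compose[OF this Qk_measurable] show ?thesis unfolding Z_def by measurable
  qed
  have Rm: "(\<lambda>\<omega>. restrict \<omega> (I j)) \<in> measurable \<Phi> (PiM (I j) (\<lambda>_. unif2pi))" if "j < K" for j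
    unfolding \<Phi>_def' by (rule measurable_restrict_subset) (use that in \<open>auto simp: I_def\<close>)
  have Ym: "Y j \<in> borel_measurable \<Phi>" if "j < K" for j
    unfolding Y_def using measurable_compose[OF Rm[OF that] Zm] .
  have Ybnd: "\<bar>Y j \<omega>\<bar> \<le> Mx" for j \<omega>
  proof -
    have "0 \<le> Qk b P L \<delta> K \<beta> j (\<lambda>l\<in>{1..L}. cis (restrict \<omega> (I j) (l,j) + c j l))"
         "Qk b P L \<delta> K \<beta> j (\<lambda>l\<in>{1..L}. cis (restrict \<omega> (I j) (l,j) + c j l)) \<le> Mx"
      using Qk_bounds[OF P b dl] unfolding Mx_def by auto
    moreover have "0 \<le> Rbar b P L \<delta> K \<beta> j" "Rbar b P L \<delta> K \<beta> j \<le> Mx"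
      using Rbar_bounds[OF L P b dl] unfolding Mx_def by auto
    ultimately show ?thesis unfolding Y_def Z_def by linarith
  qed
  have Yint: "integrable \<Phi> (Y j)" if "j < K" for j
    by (rule F.integrable_const_bound[where B = Mx]) (use Ybnd Ym[OF that] in auto)
  have YYint: "integrable \<Phi> (\<lambda>\<omega>. Y j \<omega> * Y j' \<omega>)" if "j < K" "j' < K" for j j'
  proof (rule F.integrable_const_bound[where B = "Mx * Mx"])
    show "AE x in \<Phi>. norm (Y j x * Y j' x) \<le> Mx * Mx"
    proof (intro AE_I2)
      fix x
      have "0 \<le> Mx" using Ybnd[of j x] by linarith
      then have "\<bar>Y j x\<bar> * \<bar>Y j' x\<bar> \<le> Mx * Mx" by (intro mult_mono Ybnd) auto
      then show "norm (Y j x * Y j' x) \<le> Mx * Mx" by (simp add: abs_mult)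
    qed
    show "(\<lambda>\<omega>. Y j \<omega> * Y j' \<omega>) \<in> borel_measurable \<Phi>" using Ym that by measurable
  qed
  have ER: "(\<integral>\<omega>. Rk b P L d \<delta> K \<beta> \<theta> \<omega> j \<partial>\<Phi>) = Rbar b P L \<delta> K \<beta> j" if j: "j < K" for j
  proof -
    define G where "G = (\<lambda>\<psi>. Qk b P L \<delta> K \<beta> j (\<lambda>l\<in>{1..L}. cis (\<psi> l + c j l)))"
    have pm: "(\<lambda>\<omega>. \<lambda>n\<in>{1..L}. \<omega> (n,j)) \<in> measurable \<Phi> (theta_measure L)"
      unfolding \<Phi>_def' theta_measure_def by (rule meas_proj_vec) (use j in auto)
    have Gm: "G \<in> borel_measurable (theta_measure L)"
    proof -
      have "(\<lambda>\<psi>. \<lambda>l\<in>{1..L}. cis (\<psi> l + c j l)) \<in> measurable (theta_measure L) (PiM {1..L} (\<lambda>_. borel))"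
        unfolding theta_measure_def by (rule meas_shift_vec) auto
      from measurable_compose[OF this Qk_measurable] show ?thesis unfolding G_def .
    qed
    have dist: "distr \<Phi> (theta_measure L) (\<lambda>\<omega>. \<lambda>n\<in>{1..L}. \<omega> (n,j)) = theta_measure L"
      using distr_PiM_reindex[of "{1..L} \<times> {0..<K}" "\<lambda>_. unif2pi" "\<lambda>l. (l,j)" "{1..L}"] j prob_unif2pi
      unfolding \<Phi>_def' theta_measure_def by (auto simp: inj_on_def)
    have "(\<integral>\<omega>. Rk b P L d \<delta> K \<beta> \<theta> \<omega> j \<partial>\<Phi>) = (\<integral>\<omega>. G (\<lambda>n\<in>{1..L}. \<omega> (n,j)) \<partial>\<Phi>)"
      unfolding Rk_eq G_def c_def by (rule Bochner_Integration.integral_cong[OF refl], rule Qk_cong) auto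
    also have "\<dots> = integral\<^sup>L (distr \<Phi> (theta_measure L) (\<lambda>\<omega>. \<lambda>n\<in>{1..L}. \<omega> (n,j))) G"
      by (rule integral_distr[OF pm Gm, symmetric])
    also have "\<dots> = (\<integral>\<psi>. Qk b P L \<delta> K \<beta> j (\<lambda>l\<in>{1..L}. cis (\<psi> l + c j l)) \<partial>theta_measure L)"
      unfolding dist G_def ..
    also have "\<dots> = (\<integral>\<psi>. Qk b P L \<delta> K \<beta> j (\<lambda>l\<in>{1..L}. cis (\<psi> l)) \<partial>theta_measure L)"
      by (rule theta_shift[OF L Qk_measurable])
    also have "\<dots> = Rbar b P L \<delta> K \<beta> j" using Rbar_eq[of b P L \<delta> K \<beta> j] by simp
    finally show ?thesis .
  qed
  have EY: "(\<integral>\<omega>. Y j \<omega> \<partial>\<Phi>) = 0" if j: "j < K" for j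
  proof -
    have "(\<integral>\<omega>. Rk b P L d \<delta> K \<beta> \<theta> \<omega> j \<partial>\<Phi>) = (\<integral>\<omega>. Y j \<omega> + Rbar b P L \<delta> K \<beta> j \<partial>\<Phi>)"
      by (rule Bochner_Integration.integral_cong[OF refl]) (simp add: Yeq)
    also have "\<dots> = (\<integral>\<omega>. Y j \<omega> \<partial>\<Phi>) + (\<integral>\<omega>. Rbar b P L \<delta> K \<beta> j \<partial>\<Phi>)"
      by (rule Bochner_Integration.integral_add) (use Yint[OF j] in auto)
    also have "(\<integral>\<omega>. Rbar b P L \<delta> K \<beta> j \<partial>\<Phi>) = Rbar b P L \<delta> K \<beta> j"
      using F.prob_space by simp
    finally show ?thesis using ER[OF j] by simp
  qed
  have ind0: "F.indep_vars (\<lambda>_. unif2pi) (\<lambda>i \<omega>. \<omega> i) ({1..L} \<times> {0..<K})"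
    unfolding \<Phi>_def' by (rule indep_coords) (use L K prob_unif2pi in auto)
  have ind1: "F.indep_vars (\<lambda>j. PiM (I j) (\<lambda>_. unif2pi)) (\<lambda>j \<omega>. restrict (\<lambda>i. \<omega> i) (I j)) {0..<K}"
    by (rule F.indep_vars_restrict[OF ind0]) (auto simp: I_def disjoint_family_on_def)
  have ind2: "F.indep_vars (\<lambda>_. borel) (\<lambda>j \<omega>. Z j (restrict (\<lambda>i. \<omega> i) (I j))) {0..<K}"
    by (rule F.indep_vars_compose2[OF ind1]) (rule Zm)
  then have ind3: "F.indep_vars (\<lambda>_. borel) Y {0..<K}" unfolding Y_def by simp
  have cross: "(\<integral>\<omega>. Y j \<omega> * Y j' \<omega> \<partial>\<Phi>) = 0" if jj: "j < K" "j' < K" "j \<noteq> j'" for j j'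
  proof -
    have i2: "F.indep_vars (\<lambda>_. borel) Y {j,j'}" by (rule F.indep_vars_subset[OF ind3]) (use jj in auto)
    have "(\<integral>\<omega>. (\<Prod>i\<in>{j,j'}. Y i \<omega>) \<partial>\<Phi>) = (\<Prod>i\<in>{j,j'}. \<integral>\<omega>. Y i \<omega> \<partial>\<Phi>)"
      by (rule F.indep_vars_lebesgue_integral[OF _ i2]) (use jj Yint in auto)
    then show ?thesis using jj EY by simp
  qed
  define X where "X = (\<lambda>\<omega>. \<Sum>k<K. Y k \<omega>)"
  have Xm: "X \<in> borel_measurable \<Phi>" unfolding X_def using Ym by (intro borel_measurable_sum) auto
  have X2: "(\<lambda>\<omega>. (X \<omega>)\<^sup>2) = (\<lambda>\<omega>. \<Sum>k<K. \<Sum>k'<K. Y k \<omega> * Y k' \<omega>)"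
    by (simp add: power2_eq_square sum_product X_def)
  have X2int: "integrable \<Phi> (\<lambda>\<omega>. (X \<omega>)\<^sup>2)" unfolding X2
    by (intro Bochner_Integration.integrable_sum YYint) auto
  have EX: "(\<integral>\<omega>. X \<omega> \<partial>\<Phi>) = 0" unfolding X_def
    by (subst Bochner_Integration.integral_sum) (use Yint EY in auto)
  have "(\<integral>\<omega>. (X \<omega>)\<^sup>2 \<partial>\<Phi>) = (\<Sum>k<K. \<integral>\<omega>. (\<Sum>k'<K. Y k \<omega> * Y k' \<omega>) \<partial>\<Phi>)"
    unfolding X2 by (rule Bochner_Integration.integral_sum) (auto intro!: Bochner_Integration.integrable_sum YYint)
  also have "\<dots> = (\<Sum>k<K. \<Sum>k'<K. \<integral>\<omega>. Y k \<omega> * Y k' \<omega> \<partial>\<Phi>)"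
    by (rule sum.cong[OF refl], rule Bochner_Integration.integral_sum) (auto intro!: YYint)
  also have "\<dots> = (\<Sum>k<K. \<integral>\<omega>. Y k \<omega> * Y k \<omega> \<partial>\<Phi>)"
  proof (rule sum.cong[OF refl])
    fix k assume k: "k \<in> {..<K}"
    have "(\<Sum>k'<K. \<integral>\<omega>. Y k \<omega> * Y k' \<omega> \<partial>\<Phi>) = (\<Sum>k'<K. if k' = k then \<integral>\<omega>. Y k \<omega> * Y k \<omega> \<partial>\<Phi> else 0)"
      by (rule sum.cong[OF refl]) (use k cross in auto)
    also have "\<dots> = (\<integral>\<omega>. Y k \<omega> * Y k \<omega> \<partial>\<Phi>)" using k by (simp add: sum.delta)
    finally show "(\<Sum>k'<K. \<integral>\<omega>. Y k \<omega> * Y k' \<omega> \<partial>\<Phi>) = (\<integral>\<omega>. Y k \<omega> * Y k \<omega> \<partial>\<Phi>)" .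
  qed
  also have "\<dots> \<le> (\<Sum>k<K. Mx * Mx)"
  proof (rule sum_mono)
    fix k assume k: "k \<in> {..<K}"
    show "(\<integral>\<omega>. Y k \<omega> * Y k \<omega> \<partial>\<Phi>) \<le> Mx * Mx"
    proof (rule F.integral_le_const[OF YYint], goal_cases)
      case 3 show ?case
      proof (intro AE_I2)
        fix x
        have "0 \<le> Mx" using Ybnd[of k x] by linarith
        then have "\<bar>Y k x\<bar> * \<bar>Y k x\<bar> \<le> Mx * Mx" by (intro mult_mono Ybnd) auto
        then show "Y k x * Y k x \<le> Mx * Mx" by (simp add: abs_mult[symmetric])
      qed
    qed (use k in auto)
  qed
  finally have V: "(\<integral>\<omega>. (X \<omega>)\<^sup>2 \<partial>\<Phi>) \<le> real K * Mx\<^sup>2" by (simp add: power2_eq_square)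
  have ev: "{\<phi> \<in> space (phi_measure L K). e \<le> \<bar>\<Sum>k<K. Rk b P L d \<delta> K \<beta> \<theta> \<phi> k - Rbar b P L \<delta> K \<beta> k\<bar>}
      = {x \<in> space \<Phi>. e \<le> \<bar>X x - F.expectation X\<bar>}"
    using EX by (simp add: X_def Yeq \<Phi>_def)
  have "F.prob {x \<in> space \<Phi>. e \<le> \<bar>X x - F.expectation X\<bar>} \<le> F.variance X / e\<^sup>2"
    by (rule F.Chebyshev_inequality[OF Xm X2int e])
  also have "F.variance X = (\<integral>\<omega>. (X \<omega>)\<^sup>2 \<partial>\<Phi>)" unfolding EX by simp
  also have "\<dots> / e\<^sup>2 \<le> real K * Mx\<^sup>2 / e\<^sup>2" using V e by (intro divide_right_mono) auto
  finally show ?thesis unfolding ev Mx_def \<Phi>_def .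
qed



lemma prob_beta: "prob_space (beta_measure L pB)"
  unfolding beta_measure_def by (rule prob_space_PiM) (auto intro: prob_space_measure_pmf)
lemma prob_theta: "prob_space (theta_measure L)"
  unfolding theta_measure_def by (rule prob_space_PiM) (use prob_unif2pi in auto)
lemma prob_phi: "prob_space (phi_measure L K)"
  unfolding phi_measure_def by (rule prob_space_PiM) (use prob_unif2pi in auto)

lemma joint_bound:
  assumes L: "L \<ge> 1" and P: "P \<ge> 0" and b: "b > 1" and dl: "\<forall>l\<in>{1..L}. 0 \<le> \<delta> l \<and> \<delta> l \<le> 1"
    and K: "K \<ge> 1" and e: "e > 0" and DK: "real K + of_int D > 0"
  shows "measure (joint_measure L pB K)
            {\<omega> \<in> space (joint_measure L pB K).
               \<bar>(1 / (real K + of_int D)) *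
                 (\<Sum>k<K. Rk b P L d \<delta> K (fst \<omega>) (fst (snd \<omega>)) (snd (snd \<omega>)) k
                          - Rbar b P L \<delta> K (fst \<omega>) k)\<bar> \<ge> e}
         \<le> real K * (log b (1 + (real L)\<^sup>2 * P))\<^sup>2 / (e * (real K + of_int D))\<^sup>2"
    (is "measure ?J ?A \<le> ?bnd")
proof -
  define B where "B = beta_measure L pB"
  define T where "T = theta_measure L"
  define F where "F = phi_measure L K"
  have J: "?J = B \<Otimes>\<^sub>M (T \<Otimes>\<^sub>M F)" unfolding joint_measure_def B_def T_def F_def ..
  interpret PB: prob_space B unfolding B_def by (rule prob_beta)
  interpret PT: prob_space T unfolding T_def by (rule prob_theta)
  interpret PF: prob_space F unfolding F_def by (rule prob_phi)
  interpret PTF: prob_space "T \<Otimes>\<^sub>M F" by (rule prob_space_pair) unfold_locales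
  interpret PJ: prob_space "B \<Otimes>\<^sub>M (T \<Otimes>\<^sub>M F)" by (rule prob_space_pair) unfold_locales
  have bnd0: "0 \<le> ?bnd" by simp
  define C where "C = (\<lambda>\<beta> \<theta>. {\<phi> \<in> space F. e * (real K + of_int D) \<le> \<bar>\<Sum>k<K. Rk b P L d \<delta> K \<beta> \<theta> \<phi> k - Rbar b P L \<delta> K \<beta> k\<bar>})"
  have core': "measure F (C \<beta> \<theta>) \<le> ?bnd" for \<beta> \<theta>
    unfolding C_def F_def using core[OF L P b dl K, of "e * (real K + of_int D)" d \<beta> \<theta>] e DK by simp
  have absq: "(\<bar>(1 / (real K + of_int D)) * x\<bar> \<ge> e) \<longleftrightarrow> (e * (real K + of_int D) \<le> \<bar>x\<bar>)" for x :: real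
    using DK by (simp add: abs_mult field_simps)
  have absq2: "(e \<le> \<bar>x\<bar> / \<bar>real K + real_of_int D\<bar>) \<longleftrightarrow> (e * (real K + of_int D) \<le> \<bar>x\<bar>)" for x :: real
    using DK by (simp add: pos_le_divide_eq)
  show ?thesis
  proof (cases "?A \<in> sets ?J")
    case False
    then show ?thesis using bnd0 by (simp add: measure_notin_sets)
  next
    case True
    then have Aset: "?A \<in> sets (B \<Otimes>\<^sub>M (T \<Otimes>\<^sub>M F))" unfolding J .
    have sec: "emeasure F (Pair \<theta> -` (Pair \<beta> -` ?A)) \<le> ennreal ?bnd" for \<beta> \<theta>
    proof -
      have S: "Pair \<theta> -` (Pair \<beta> -` ?A) \<in> sets F"
      proof -
        have S1: "Pair \<beta> -` ?A \<in> sets (T \<Otimes>\<^sub>M F)" by (rule sets_Pair1[OF Aset])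
        show ?thesis by (rule sets_Pair1[OF S1])
      qed
      show ?thesis
      proof (cases "\<beta> \<in> space B \<and> \<theta> \<in> space T")
        case True
        then have "Pair \<theta> -` (Pair \<beta> -` ?A) = C \<beta> \<theta>"
          unfolding C_def J by (auto simp: space_pair_measure absq absq2)
        then show ?thesis using S core' PF.emeasure_eq_measure by simp
      next
        case False
        then have E0: "Pair \<theta> -` (Pair \<beta> -` ?A) = {}"
          by (auto simp: J space_pair_measure)
        show ?thesis by (simp only: E0 emeasure_empty) simp
      qed
    qed
    have sec2: "emeasure (T \<Otimes>\<^sub>M F) (Pair \<beta> -` ?A) \<le> ennreal ?bnd" for \<beta>
    proof -
      have S: "Pair \<beta> -` ?A \<in> sets (T \<Otimes>\<^sub>M F)" by (rule sets_Pair1[OF Aset])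
      have "emeasure (T \<Otimes>\<^sub>M F) (Pair \<beta> -` ?A) = (\<integral>\<^sup>+\<theta>. emeasure F (Pair \<theta> -` (Pair \<beta> -` ?A)) \<partial>T)"
        by (rule PF.emeasure_pair_measure_alt[OF S])
      also have "\<dots> \<le> (\<integral>\<^sup>+\<theta>. ennreal ?bnd \<partial>T)" by (intro nn_integral_mono sec)
      also have "\<dots> = ennreal ?bnd" using PT.emeasure_space_1 by simp
      finally show ?thesis .
    qed
    have "emeasure (B \<Otimes>\<^sub>M (T \<Otimes>\<^sub>M F)) ?A = (\<integral>\<^sup>+\<beta>. emeasure (T \<Otimes>\<^sub>M F) (Pair \<beta> -` ?A) \<partial>B)"
      by (rule PTF.emeasure_pair_measure_alt[OF Aset])
    also have "\<dots> \<le> (\<integral>\<^sup>+\<beta>. ennreal ?bnd \<partial>B)" by (intro nn_integral_mono sec2)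
    also have "\<dots> = ennreal ?bnd" using PB.emeasure_space_1 by simp
    finally have "emeasure (B \<Otimes>\<^sub>M (T \<Otimes>\<^sub>M F)) ?A \<le> ennreal ?bnd" .
    then have "measure (B \<Otimes>\<^sub>M (T \<Otimes>\<^sub>M F)) ?A \<le> ?bnd" using PJ.emeasure_eq_measure bnd0 by simp
    moreover have "measure ?J ?A = measure (B \<Otimes>\<^sub>M (T \<Otimes>\<^sub>M F)) ?A" by (simp only: J)
    ultimately show ?thesis by simp
  qed
qed



theorem proposition11:
  fixes L :: nat and P pB \<tau>max b \<epsilon> :: real and D :: int
    and d :: "nat \<Rightarrow> nat" and \<delta> \<tau> :: "nat \<Rightarrow> real"
  assumes "L \<ge> 1" and "P \<ge> 0" and "0 \<le> pB" and "pB \<le> 1"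
    and "\<tau>max > 0" and "D \<ge> ceiling \<tau>max + 1"
    and "\<forall>l\<in>{1..L}. 0 \<le> \<tau> l \<and> \<tau> l \<le> \<tau>max"
    and "\<forall>l\<in>{1..L}. \<tau> l = real (d l) + \<delta> l \<and> 0 \<le> \<delta> l \<and> \<delta> l < 1"
    and "b > 1"
    and "\<epsilon> > 0"
  shows "(\<lambda>K. measure (joint_measure L pB K)
            {\<omega> \<in> space (joint_measure L pB K).
               \<bar>(1 / (real K + of_int D)) *
                 (\<Sum>k<K. Rk b P L d \<delta> K (fst \<omega>) (fst (snd \<omega>)) (snd (snd \<omega>)) k
                          - Rbar b P L \<delta> K (fst \<omega>) k)\<bar> \<ge> \<epsilon>})
         \<longlonglongrightarrow> 0"
proof -
  have dl: "\<forall>l\<in>{1..L}. 0 \<le> \<delta> l \<and> \<delta> l \<le> 1" using assms(8) by force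
  have "0 < ceiling \<tau>max" using assms(5) by simp
  then have "D \<ge> 2" using assms(6) by linarith
  then have D2: "real_of_int D \<ge> 2" by simp
  define M where "M = (log b (1 + (real L)\<^sup>2 * P))\<^sup>2"
  define g where "g = (\<lambda>K::nat. real K * M / (\<epsilon> * (real K + of_int D))\<^sup>2)"
  have lim: "g \<longlonglongrightarrow> 0" unfolding g_def using assms(10) by real_asymp
  show ?thesis
  proof (rule tendsto_sandwich[OF _ _ tendsto_const lim])
    show "\<forall>\<^sub>F K in sequentially. 0 \<le> measure (joint_measure L pB K)
            {\<omega> \<in> space (joint_measure L pB K).
               \<bar>(1 / (real K + of_int D)) *
                 (\<Sum>k<K. Rk b P L d \<delta> K (fst \<omega>) (fst (snd \<omega>)) (snd (snd \<omega>)) k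
                          - Rbar b P L \<delta> K (fst \<omega>) k)\<bar> \<ge> \<epsilon>}" by simp
    show "\<forall>\<^sub>F K in sequentially. measure (joint_measure L pB K)
            {\<omega> \<in> space (joint_measure L pB K).
               \<bar>(1 / (real K + of_int D)) *
                 (\<Sum>k<K. Rk b P L d \<delta> K (fst \<omega>) (fst (snd \<omega>)) (snd (snd \<omega>)) k
                          - Rbar b P L \<delta> K (fst \<omega>) k)\<bar> \<ge> \<epsilon>} \<le> g K"
    proof (rule eventually_sequentiallyI[of 1])
      fix K :: nat assume K: "K \<ge> 1"
      have DK: "real K + of_int D > 0" using D2 by simp
      show "measure (joint_measure L pB K)
            {\<omega> \<in> space (joint_measure L pB K).
               \<bar>(1 / (real K + of_int D)) *
                 (\<Sum>k<K. Rk b P L d \<delta> K (fst \<omega>) (fst (snd \<omega>)) (snd (snd \<omega>)) k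
                          - Rbar b P L \<delta> K (fst \<omega>) k)\<bar> \<ge> \<epsilon>} \<le> g K"
        unfolding g_def M_def by (rule joint_bound[OF assms(1,2,9) dl K assms(10) DK])
    qed
  qed
qed


end
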